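(* Let $n\ge 2$ and $a_1,\dots,a_n\in\mathbb{C}$. For $i=1,\dots,n$ let $p_i(x)=\prod_{l\ne i,\,1\le l\le n}(x-a_l)$. Then for every $x\in\mathbb{C}$ the Wronskian \[ W[p_1,\dots,p_n](x)=\det\begin{pmatrix}p_1(x)&\cdots&p_n(x)\\ p_1'(x)&\cdots&p_n'(x)\\ \vdots&&\vdots\\ p_1^{(n-1)}(x)&\cdots&p_n^{(n-1)}(x)\end{pmatrix} \] satisfies \[ W[p_1,\dots,p_n](x)=\Big(\prod_{k=0}^{n-1}k!\Big)\prod_{1\le i<k\le n}(a_i-a_k). \] *)

theory Defs
  imports "HOL-Computational_Algebra.Polynomial" "Jordan_Normal_Form.Determinant"
begin

text \<open>Indices are 0-based: a 0, ..., a (n-1) stand for a_1, ..., a_n.\<close>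

definition node_poly :: "nat \<Rightarrow> (nat \<Rightarrow> complex) \<Rightarrow> nat \<Rightarrow> complex poly" where
  "node_poly n a i = (\<Prod>l\<in>{0..<n} - {i}. [:- a l, 1:])"

definition wronskian :: "nat \<Rightarrow> (nat \<Rightarrow> complex poly) \<Rightarrow> complex \<Rightarrow> complex" where
  "wronskian n p x = det (mat n n (\<lambda>(r, c). poly ((pderiv ^^ r) (p c)) x))"

end

theory Submission
  imports Defs
begin

lemma pderiv_iter_add: "(pderiv ^^ r) (p + q) = (pderiv ^^ r) p + (pderiv ^^ r) q"
  by (induction r) (auto simp: pderiv_add)

lemma pderiv_iter_smult: "(pderiv ^^ r) (smult c p) = smult c ((pderiv ^^ r) p)"
  by (induction r) (auto simp: pderiv_smult)

lemma pderiv_iter_0: "(pderiv ^^ r) 0 = 0"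
  by (induction r) auto

lemma pderiv_iter_sum: "(pderiv ^^ r) (\<Sum>j\<in>A. f j) = (\<Sum>j\<in>A. (pderiv ^^ r) (f j))"
  by (induction A rule: infinite_finite_induct) (auto simp: pderiv_iter_add pderiv_iter_0)

lemma pderiv_iter_zero: "degree (p::complex poly) < r \<Longrightarrow> (pderiv ^^ r) p = 0"
proof (induction r arbitrary: p)
  case 0 then show ?case by simp
next
  case (Suc r)
  show ?case
  proof (cases "r = 0")
    case True
    with Suc have "degree p = 0" by simp
    then show ?thesis using True by (simp add: pderiv_eq_0_iff)
  next
    case False
    have "degree (pderiv p) < r" using Suc.prems False by (simp add: degree_pderiv)
    then show ?thesis by (simp add: funpow_Suc_right Suc.IH del: funpow.simps)
  qed
qed

lemma pderiv_iter_monom_diag: "(pderiv ^^ r) (monom c r) = [:c * fact r:]"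
proof (induction r arbitrary: c)
  case 0 then show ?case by (simp add: monom_0)
next
  case (Suc r)
  have "(pderiv ^^ Suc r) (monom c (Suc r)) = (pderiv ^^ r) (monom (of_nat (Suc r) * c) r)"
    by (simp add: funpow_Suc_right pderiv_monom del: funpow.simps)
  also have "\<dots> = [:c * fact (Suc r):]" using Suc.IH by (simp add: algebra_simps)
  finally show ?case .
qed

lemma poly_pderiv_iter_expand:
  fixes p :: "complex poly"
  assumes "degree p < n"
  shows "poly ((pderiv ^^ r) p) x = (\<Sum>j<n. poly ((pderiv ^^ r) (monom 1 j)) x * coeff p j)"
proof -
  have "p = (\<Sum>j<n. smult (coeff p j) (monom 1 j))"
  proof -
    have "p = (\<Sum>i\<le>n - 1. monom (coeff p i) i)" using assms poly_as_sum_of_monoms'[of p "n-1"] by simp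
    also have "{..n-1} = {..<n}" using assms by auto
    finally show ?thesis by (simp add: smult_monom)
  qed
  then have "(pderiv ^^ r) p = (\<Sum>j<n. smult (coeff p j) ((pderiv ^^ r) (monom 1 j)))"
    by (metis (no_types, lifting) pderiv_iter_smult pderiv_iter_sum sum.cong)
  then show ?thesis by (simp add: poly_sum mult.commute)
qed

lemma poly_expand_n:
  fixes p :: "complex poly"
  assumes "degree p < n"
  shows "poly p y = (\<Sum>j<n. y ^ j * coeff p j)"
proof -
  have "poly p y = (\<Sum>i\<le>degree p. coeff p i * y ^ i)" by (rule poly_altdef)
  also have "\<dots> = (\<Sum>j<n. y ^ j * coeff p j)"
    apply (rule sum.mono_neutral_cong_left) using assms by (auto simp: coeff_eq_0)
  finally show ?thesis .
qed

lemma mat_mult_eval: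
  fixes p :: "nat \<Rightarrow> complex poly"
  assumes "\<And>c. c < n \<Longrightarrow> degree (p c) < n"
  shows "mat n n (\<lambda>(r,c). poly ((pderiv ^^ r) (p c)) x)
       = mat n n (\<lambda>(r,j). poly ((pderiv ^^ r) (monom 1 j)) x) * mat n n (\<lambda>(j,c). coeff (p c) j)"
  by (rule eq_matI) (auto simp: scalar_prod_def poly_pderiv_iter_expand[OF assms] intro!: sum.cong)

lemma mat_mult_val:
  fixes p :: "nat \<Rightarrow> complex poly"
  assumes "\<And>c. c < n \<Longrightarrow> degree (p c) < n"
  shows "mat n n (\<lambda>(m,c). poly (p c) (a m))
       = mat n n (\<lambda>(m,j). a m ^ j) * mat n n (\<lambda>(j,c). coeff (p c) j)"
  by (rule eq_matI) (auto simp: scalar_prod_def poly_expand_n[OF assms] intro!: sum.cong)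

lemma det_M: "det (mat n n (\<lambda>(r,j). poly ((pderiv ^^ r) (monom (1::complex) j)) x)) = (\<Prod>r<n. fact r)"
proof -
  have "det (mat n n (\<lambda>(r,j). poly ((pderiv ^^ r) (monom (1::complex) j)) x))
     = prod_list (diag_mat (mat n n (\<lambda>(r,j). poly ((pderiv ^^ r) (monom (1::complex) j)) x)))"
    by (rule det_upper_triangular) (auto simp: upper_triangular_def pderiv_iter_zero degree_monom_eq)
  also have "\<dots> = (\<Prod>r<n. fact r)"
    by (simp add: prod_list_diag_prod pderiv_iter_monom_diag atLeast0LessThan)
  finally show ?thesis .
qed

definition qpoly :: "(nat \<Rightarrow> complex) \<Rightarrow> nat \<Rightarrow> complex poly" where
  "qpoly a k = (\<Prod>l<k. [:- a l, 1:])"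

lemma degree_qpoly: "degree (qpoly a k) = k"
  unfolding qpoly_def by (subst degree_prod_eq_sum_degree) auto

lemma lead_qpoly: "coeff (qpoly a k) k = 1"
  using lead_coeff_prod[of "\<lambda>l. [:- a l, 1:]" "{..<k}"] degree_qpoly[of a k]
  unfolding qpoly_def by simp

lemma det_vandermonde: "det (mat n n (\<lambda>(m,j). (a::nat\<Rightarrow>complex) m ^ j)) = (\<Prod>m<n. \<Prod>l<m. (a m - a l))"
proof -
  have d: "\<And>c. c < n \<Longrightarrow> degree (qpoly a c) < n" by (simp add: degree_qpoly)
  have "det (mat n n (\<lambda>(m,c). poly (qpoly a c) (a m)))
     = det (mat n n (\<lambda>(m,j). a m ^ j)) * det (mat n n (\<lambda>(j,c). coeff (qpoly a c) j))"
  proof -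
    have e: "mat n n (\<lambda>(m,c). poly (qpoly a c) (a m)) = mat n n (\<lambda>(m,j). a m ^ j) * mat n n (\<lambda>(j,c). coeff (qpoly a c) j)"
      by (rule mat_mult_val) (rule d)
    show ?thesis unfolding e by (rule det_mult) auto
  qed
  also have "det (mat n n (\<lambda>(j,c). coeff (qpoly a c) j)) = 1"
  proof -
    have "det (mat n n (\<lambda>(j,c). coeff (qpoly a c) j)) = prod_list (diag_mat (mat n n (\<lambda>(j,c). coeff (qpoly a c) j)))"
      by (rule det_upper_triangular) (auto simp: upper_triangular_def coeff_eq_0 degree_qpoly)
    also have "\<dots> = 1" by (simp add: prod_list_diag_prod lead_qpoly)
    finally show ?thesis .
  qed
  also have "det (mat n n (\<lambda>(m,c). poly (qpoly a c) (a m))) = (\<Prod>m<n. \<Prod>l<m. (a m - a l))"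
  proof -
    have "det (mat n n (\<lambda>(m,c). poly (qpoly a c) (a m))) = prod_list (diag_mat (mat n n (\<lambda>(m,c). poly (qpoly a c) (a m))))"
      by (rule det_lower_triangular[of n]) (auto simp: qpoly_def poly_prod)
    also have "\<dots> = (\<Prod>m<n. \<Prod>l<m. (a m - a l))"
      by (simp add: prod_list_diag_prod qpoly_def poly_prod atLeast0LessThan)
    finally show ?thesis .
  qed
  finally show ?thesis by simp
qed

lemma degree_node: "c < n \<Longrightarrow> degree (node_poly n a c) < n"
  unfolding node_poly_def by (subst degree_prod_eq_sum_degree) auto

lemma poly_node: "m < n \<Longrightarrow> i < n \<Longrightarrow> poly (node_poly n a i) (a m) = (if m = i then (\<Prod>l\<in>{0..<n}-{i}. a i - a l) else 0)"
  unfolding node_poly_def poly_prod by auto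

lemma node_eq: assumes "a l = a m" "l < n" "m < n" shows "node_poly n a l = node_poly n a m"
proof (cases "l = m")
  case False
  have "node_poly n a l = [:- a m, 1:] * (\<Prod>j\<in>{0..<n}-{l}-{m}. [:- a j, 1:])"
    unfolding node_poly_def using assms False by (subst prod.remove[of _ m]) auto
  moreover have "node_poly n a m = [:- a l, 1:] * (\<Prod>j\<in>{0..<n}-{m}-{l}. [:- a j, 1:])"
    unfolding node_poly_def using assms False by (subst prod.remove[of _ l]) auto
  moreover have "{0..<n}-{l}-{m} = {0..<n}-{m}-{l}" by auto
  ultimately show ?thesis using assms by simp
qed simp

theorem mainTheorem3:
  fixes n :: nat and a :: "nat \<Rightarrow> complex" and x :: complex
  assumes "n \<ge> 2"
  shows "wronskian n (node_poly n a) x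
         = of_nat (\<Prod>k<n. fact k) * (\<Prod>i<n. \<Prod>k\<in>{i<..<n}. (a i - a k))"
proof -
  let ?p = "node_poly n a"
  let ?C = "mat n n (\<lambda>(j,c). coeff (?p c) j)"
  let ?V = "mat n n (\<lambda>(m,j). a m ^ j)"
  let ?R = "(\<Prod>i<n. \<Prod>k\<in>{i<..<n}. (a i - a k))"
  have d: "\<And>c. c < n \<Longrightarrow> degree (?p c) < n" by (rule degree_node)
  have W: "wronskian n ?p x = (\<Prod>k<n. fact k) * det ?C"
  proof -
    have e: "mat n n (\<lambda>(r,c). poly ((pderiv ^^ r) (?p c)) x)
       = mat n n (\<lambda>(r,j). poly ((pderiv ^^ r) (monom 1 j)) x) * ?C"
      by (rule mat_mult_eval) (rule d)
    show ?thesis unfolding wronskian_def e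
      by (subst det_mult[of _ n]) (auto simp: det_M)
  qed
  have VC: "det ?V * det ?C = (\<Prod>i<n. \<Prod>l\<in>{0..<n}-{i}. a i - a l)"
  proof -
    have e: "mat n n (\<lambda>(m,c). poly (?p c) (a m)) = ?V * ?C"
      by (rule mat_mult_val) (rule d)
    have "det (mat n n (\<lambda>(m,c). poly (?p c) (a m))) = prod_list (diag_mat (mat n n (\<lambda>(m,c). poly (?p c) (a m))))"
      by (rule det_upper_triangular) (auto simp: upper_triangular_def poly_node)
    also have "\<dots> = (\<Prod>i<n. \<Prod>l\<in>{0..<n}-{i}. a i - a l)"
      by (simp add: prod_list_diag_prod poly_node atLeast0LessThan)
    finally show ?thesis unfolding e by (subst (asm) det_mult[of _ n]) auto
  qed
  show ?thesis
  proof (cases "det ?V = 0")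
    case False
    have split: "\<And>i. i < n \<Longrightarrow> (\<Prod>l\<in>{0..<n}-{i}. a i - a l) = (\<Prod>l<i. a i - a l) * (\<Prod>k\<in>{i<..<n}. a i - a k)"
    proof -
      fix i assume "i < n"
      then have eq: "{0..<n}-{i} = {..<i} \<union> {i<..<n}" by auto
      show "(\<Prod>l\<in>{0..<n}-{i}. a i - a l) = (\<Prod>l<i. a i - a l) * (\<Prod>k\<in>{i<..<n}. a i - a k)"
        unfolding eq by (rule prod.union_disjoint) auto
    qed
    have "(\<Prod>i<n. \<Prod>l\<in>{0..<n}-{i}. a i - a l) = (\<Prod>i<n. \<Prod>l<i. a i - a l) * ?R"
      by (subst prod.distrib[symmetric]) (rule prod.cong, auto simp: split)
    then have "det ?V * det ?C = det ?V * ?R"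
      using VC det_vandermonde[of n a] by argo
    then have "det ?C = ?R" using False mult_left_cancel[of "det ?V" "det ?C" ?R] by blast
    then show ?thesis using W by simp
  next
    case True
    then obtain m l where ml: "m < n" "l < m" "a m = a l"
      unfolding det_vandermonde by auto
    have "?p l = ?p m" by (rule node_eq) (use ml in auto)
    have "wronskian n ?p x = 0"
      unfolding wronskian_def
      by (rule det_identical_columns[of _ n l m]) (use ml \<open>?p l = ?p m\<close> in \<open>auto intro!: eq_vecI\<close>)
    moreover have "?R = 0"
    proof -
      have h: "(\<Prod>k\<in>{l<..<n}. a l - a k) = 0"
        using ml by (intro prod_zero bexI[of _ m]) auto
      show ?thesis
        apply (rule prod_zero, simp) apply (rule bexI[of _ l]) apply (rule h) using ml by simp
    qed
    ultimately show ?thesis by simp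
  qed
qed

end
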